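(* Let $X_1\in\mathbb{S}^n_{++}$ and let $\mathbb{C}=\operatorname{conv}\{X_1,Y_1,\dots,Y_k\}$ be the Euclidean convex hull, and $\mathbb{R}_{>0}\cdot\mathbb{C}=\{cX: X\in\mathbb{C},\ c>0\}$. Then there exists $X^*\in\mathbb{R}_{>0}\cdot\mathbb{C}$ such that $$m^k_{X^*}Y_k+\dots+m^1_{X^*}Y_1+\Big(\sum_{j=1}^k o^j_{X^*}\Big)X^*=0.$$
   Context: $\mathbb{S}^n_{++}$ denotes the set of real symmetric positive definite $n\times n$ matrices. For $0<\alpha\le\beta$ and $t\in\mathbb{R}$ set $\varphi_{\alpha\beta}(t)=\frac{\beta^t-\alpha^t}{\beta-\alpha}$ and $\psi_{\alpha\beta}(t)=\frac{\beta\alpha^t-\alpha\beta^t}{\beta-\alpha}$ if $\beta>\alpha$, and $\varphi_{\alpha\beta}(t)=t\alpha^{t-1}$, $\psi_{\alpha\beta}(t)=(1-t)\alpha^t$ if $\beta=\alpha$. Fix $k\ge1$ and $Y_1,\dots,Y_k\in\mathbb{S}^n_{++}$. For $1\le j\le k$ and $X\in\mathbb{S}^n_{++}$ let $\alpha=\lambda_{\min}(Y_jX^{-1})$, $\beta=\lambda_{\max}(Y_jX^{-1})$ (eigenvalues of $Y_jX^{-1}$ are real and positive), $\varphi^j_X=\varphi_{\alpha\beta}$, $\psi^j_X=\psi_{\alpha\beta}$, $m^j_X=\frac{d\varphi^j_X}{dt}(0)$ and $o^j_X=\frac{d\psi^j_X}{dt}(0)$; explicitly $m^j_X=\frac{\log\beta-\log\alpha}{\beta-\alpha}$,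 $o^j_X=\frac{\beta\log\alpha-\alpha\log\beta}{\beta-\alpha}$ if $\beta>\alpha$, and $m^j_X=1/\alpha$, $o^j_X=\log\alpha-1$ if $\beta=\alpha$. *)

theory Defs
  imports "HOL-Analysis.Analysis"
begin

definition spd :: "real^'n^'n \<Rightarrow> bool" where
  "spd A \<longleftrightarrow> transpose A = A \<and> (\<forall>x. x \<noteq> 0 \<longrightarrow> x \<bullet> (A *v x) > 0)"

definition real_eigenvalues :: "real^'n^'n \<Rightarrow> real set" where
  "real_eigenvalues A = {l. \<exists>v. v \<noteq> 0 \<and> A *v v = l *s v}"

definition lam_min :: "real^'n^'n \<Rightarrow> real^'n^'n \<Rightarrow> real" where
  "lam_min Y X = Min (real_eigenvalues (Y ** matrix_inv X))"

definition lam_max :: "real^'n^'n \<Rightarrow> real^'n^'n \<Rightarrow> real" where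
  "lam_max Y X = Max (real_eigenvalues (Y ** matrix_inv X))"

text \<open>m_{alpha beta} = phi'(0), o_{alpha beta} = psi'(0), explicit formulas.\<close>
definition m_ab :: "real \<Rightarrow> real \<Rightarrow> real" where
  "m_ab \<alpha> \<beta> = (if \<beta> = \<alpha> then 1 / \<alpha> else (ln \<beta> - ln \<alpha>) / (\<beta> - \<alpha>))"

definition o_ab :: "real \<Rightarrow> real \<Rightarrow> real" where
  "o_ab \<alpha> \<beta> = (if \<beta> = \<alpha> then ln \<alpha> - 1 else (\<beta> * ln \<alpha> - \<alpha> * ln \<beta>) / (\<beta> - \<alpha>))"

definition m_coef :: "real^'n^'n \<Rightarrow> real^'n^'n \<Rightarrow> real" where
  "m_coef Y X = m_ab (lam_min Y X) (lam_max Y X)"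

definition o_coef :: "real^'n^'n \<Rightarrow> real^'n^'n \<Rightarrow> real" where
  "o_coef Y X = o_ab (lam_min Y X) (lam_max Y X)"

end

theory Submission
  imports Defs
begin


definition qf :: "real^'n^'n \<Rightarrow> real^'n \<Rightarrow> real" where
  "qf A u = u \<bullet> (A *v u)"

lemma sym_inner:
  fixes A :: "real^'n^'n"
  assumes "transpose A = A"
  shows "(A *v x) \<bullet> y = x \<bullet> (A *v y)"
proof -
  have "(A *v x) \<bullet> y = (x v* transpose A) \<bullet> y" by simp
  also have "\<dots> = x \<bullet> (A *v y)" using assms dot_lmul_matrix by simp
  finally show ?thesis .
qed

lemma spd_pos: "spd A \<Longrightarrow> u \<noteq> 0 \<Longrightarrow> qf A u > 0"
  by (simp add: spd_def qf_def)

lemma spd_sym: "spd A \<Longrightarrow> transpose A = A"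
  by (simp add: spd_def)

lemma spd_inv:
  fixes X :: "real^'n^'n"
  assumes "spd X"
  shows "matrix_inv X ** X = mat 1 \<and> X ** matrix_inv X = mat 1"
proof -
  have "\<forall>x. X *v x = 0 \<longrightarrow> x = 0"
  proof (intro allI impI)
    fix x assume "X *v x = 0"
    then show "x = 0" using assms unfolding spd_def by (metis inner_zero_right less_irrefl)
  qed
  then have "\<exists>B. B ** X = mat 1" using matrix_left_invertible_ker by blast
  then have "invertible X" using invertible_left_inverse by blast
  then have "\<exists>A'. X ** A' = mat 1 \<and> A' ** X = mat 1" unfolding invertible_def by blast
  then have "X ** matrix_inv X = mat 1 \<and> matrix_inv X ** X = mat 1"
    unfolding matrix_inv_def by (rule someI_ex)
  then show ?thesis by simp
qed

lemma eig_iff: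
  fixes X Y :: "real^'n^'n"
  assumes "spd X"
  shows "l \<in> real_eigenvalues (Y ** matrix_inv X) \<longleftrightarrow> (\<exists>u. u \<noteq> 0 \<and> Y *v u = l *\<^sub>R (X *v u))"
proof
  assume "l \<in> real_eigenvalues (Y ** matrix_inv X)"
  then obtain v where v: "v \<noteq> 0" "(Y ** matrix_inv X) *v v = l *s v"
    unfolding real_eigenvalues_def by blast
  define u where "u = matrix_inv X *v v"
  have Xu: "X *v u = v" using spd_inv[OF assms]
    by (simp add: u_def matrix_vector_mul_assoc)
  have "u \<noteq> 0" using Xu v(1) by auto
  moreover have "Y *v u = l *\<^sub>R (X *v u)"
    using v(2) Xu by (simp add: u_def matrix_vector_mul_assoc scalar_mult_eq_scaleR)
  ultimately show "\<exists>u. u \<noteq> 0 \<and> Y *v u = l *\<^sub>R (X *v u)" by blast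
next
  assume "\<exists>u. u \<noteq> 0 \<and> Y *v u = l *\<^sub>R (X *v u)"
  then obtain u where u: "u \<noteq> 0" "Y *v u = l *\<^sub>R (X *v u)" by blast
  have "X *v u \<noteq> 0" using spd_pos[OF assms u(1)] by (auto simp: qf_def)
  moreover have "(Y ** matrix_inv X) *v (X *v u) = l *s (X *v u)"
    using u(2) spd_inv[OF assms]
    by (simp add: matrix_vector_mul_assoc[symmetric] scalar_mult_eq_scaleR)
       (metis matrix_vector_mul_assoc matrix_vector_mul_lid)
  ultimately show "l \<in> real_eigenvalues (Y ** matrix_inv X)"
    unfolding real_eigenvalues_def by blast
qed

lemma eig_R:
  assumes "spd X" "u \<noteq> 0" "Y *v u = l *\<^sub>R (X *v u)"
  shows "l = qf Y u / qf X u"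
proof -
  have "qf Y u = l * qf X u" using assms(3) by (simp add: qf_def)
  then show ?thesis using spd_pos[OF assms(1,2)] by simp
qed

lemma eig_orth:
  assumes "spd X" "spd Y" "Y *v v = l1 *\<^sub>R (X *v v)" "Y *v w = l2 *\<^sub>R (X *v w)" "l1 \<noteq> l2"
  shows "v \<bullet> (X *v w) = 0"
proof -
  have a: "v \<bullet> (Y *v w) = l2 * (v \<bullet> (X *v w))" using assms(4) by simp
  have "v \<bullet> (Y *v w) = (Y *v v) \<bullet> w" using sym_inner[OF spd_sym[OF assms(2)]] by simp
  also have "\<dots> = l1 * ((X *v v) \<bullet> w)" using assms(3) by simp
  also have "\<dots> = l1 * (v \<bullet> (X *v w))" using sym_inner[OF spd_sym[OF assms(1)]] by simp
  finally have "l1 * (v \<bullet> (X *v w)) = l2 * (v \<bullet> (X *v w))" using a by linarith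
  then show ?thesis using assms(5) by auto
qed

lemma orth_indep:
  fixes X :: "real^'n^'n"
  assumes "spd X" "\<forall>v\<in>U. v \<noteq> 0" "\<forall>v\<in>U. \<forall>w\<in>U. v \<noteq> w \<longrightarrow> v \<bullet> (X *v w) = 0"
  shows "independent U"
  unfolding real_vector.independent_explicit_module
proof (intro allI impI)
  fix t c v0 assume t: "finite t" "t \<subseteq> U" "(\<Sum>v\<in>t. c v *\<^sub>R v) = 0" "v0 \<in> t"
  have "0 = (\<Sum>v\<in>t. c v *\<^sub>R v) \<bullet> (X *v v0)" using t(3) by simp
  also have "\<dots> = (\<Sum>v\<in>t. c v * (v \<bullet> (X *v v0)))" by (simp add: inner_sum_left)
  also have "\<dots> = c v0 * (v0 \<bullet> (X *v v0)) + (\<Sum>v\<in>t-{v0}. c v * (v \<bullet> (X *v v0)))"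
    by (rule sum.remove[OF t(1) t(4)])
  also have "(\<Sum>v\<in>t-{v0}. c v * (v \<bullet> (X *v v0))) = 0"
    using t assms(3) by (intro sum.neutral) auto
  also have "c v0 * (v0 \<bullet> (X *v v0)) + 0 = c v0 * (v0 \<bullet> (X *v v0))" by simp
  finally have "c v0 * qf X v0 = 0" by (simp add: qf_def)
  moreover have "qf X v0 > 0" using spd_pos[OF assms(1)] assms(2) t by auto
  ultimately show "c v0 = 0" by simp
qed

lemma eig_finite:
  fixes X Y :: "real^'n^'n"
  assumes "spd X" "spd Y"
  shows "finite (real_eigenvalues (Y ** matrix_inv X))"
proof -
  let ?E = "real_eigenvalues (Y ** matrix_inv X)"
  define f where "f l = (SOME u. u \<noteq> 0 \<and> Y *v u = l *\<^sub>R (X *v u))" for l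
  have f: "f l \<noteq> 0 \<and> Y *v f l = l *\<^sub>R (X *v f l)" if "l \<in> ?E" for l
    using that eig_iff[OF assms(1)] unfolding f_def by (metis (mono_tags, lifting) someI_ex)
  have inj: "inj_on f ?E"
  proof (rule inj_onI)
    fix a b assume "a \<in> ?E" "b \<in> ?E" "f a = f b"
    then show "a = b" using eig_R[OF assms(1)] f by metis
  qed
  have "independent (f ` ?E)"
  proof (rule orth_indep[OF assms(1)])
    show "\<forall>v\<in>f ` ?E. v \<noteq> 0" using f by auto
    show "\<forall>v\<in>f ` ?E. \<forall>w\<in>f ` ?E. v \<noteq> w \<longrightarrow> v \<bullet> (X *v w) = 0"
    proof (clarify)
      fix a b assume ab: "a \<in> ?E" "b \<in> ?E" "f a \<noteq> f b"
      then have "a \<noteq> b" by auto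
      then show "f a \<bullet> (X *v f b) = 0" using eig_orth[OF assms] f ab by blast
    qed
  qed
  then have "finite (f ` ?E)" using independent_imp_finite by blast
  then show ?thesis using finite_imageD inj by blast
qed



definition RQ :: "real^'n^'n \<Rightarrow> real^'n^'n \<Rightarrow> real^'n \<Rightarrow> real" where
  "RQ X Y u = qf Y u / qf X u"

lemma qf_scale: "qf A (c *\<^sub>R u) = c * c * qf A u"
  by (simp add: qf_def matrix_vector_mult_scaleR)

lemma qf_zero[simp]: "qf A 0 = 0" by (simp add: qf_def)

lemma RQ_scale: "c \<noteq> 0 \<Longrightarrow> RQ X Y (c *\<^sub>R u) = RQ X Y u"
  by (simp add: RQ_def qf_scale)

lemma qf_expand: "qf A u = (\<Sum>i\<in>UNIV. u $ i * (\<Sum>j\<in>UNIV. A $ i $ j * u $ j))"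
  by (simp add: qf_def inner_vec_def matrix_vector_mult_def)

lemma qf_cont: "continuous_on S (\<lambda>p. qf (fst p) (snd p :: real^'n))"
  unfolding qf_expand by (intro continuous_intros)

lemma quad_zero:
  fixes a b :: real
  assumes "\<forall>t. a * t^2 + 2 * b * t \<le> 0"
  shows "b = 0"
proof (rule ccontr)
  assume "b \<noteq> 0"
  define s where "s = 1 / (\<bar>a\<bar> + 1)"
  have s: "s > 0" "s * \<bar>a\<bar> < 1" unfolding s_def by (auto simp: field_simps)
  have "s * a + 2 > 0" using s by (smt (verit) abs_ge_self abs_minus_cancel mult_left_mono mult_minus_right)
  moreover have "b^2 > 0" using \<open>b \<noteq> 0\<close> by simp
  ultimately have "s * b^2 * (s * a + 2) > 0" using s by simp
  moreover have "a * (s*b)^2 + 2 * b * (s*b) = s * b^2 * (s * a + 2)" by (simp add: algebra_simps power2_eq_square)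
  ultimately show False using assms by (metis not_le)
qed

lemma qf_add:
  fixes A :: "real^'n^'n"
  assumes "transpose A = A"
  shows "qf A (u + t *\<^sub>R w) = qf A u + 2 * t * (w \<bullet> (A *v u)) + t^2 * qf A w"
proof -
  have "u \<bullet> (A *v w) = w \<bullet> (A *v u)" using sym_inner[OF assms, of w u] by (simp add: inner_commute)
  then show ?thesis
    by (simp add: qf_def matrix_vector_right_distrib matrix_vector_mult_scaleR inner_add_left
        inner_add_right algebra_simps power2_eq_square)
qed

lemma stat_gen:
  fixes X Y :: "real^'n^'n"
  assumes X: "spd X" and Y: "spd Y" and u0: "u0 \<noteq> 0"
    and sgn: "s = 1 \<or> s = -1"
    and ext: "\<forall>u. u \<noteq> 0 \<longrightarrow> s * RQ X Y u \<le> s * RQ X Y u0"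
  shows "Y *v u0 = RQ X Y u0 *\<^sub>R (X *v u0)"
proof -
  define \<beta> where "\<beta> = RQ X Y u0"
  define z where "z = Y *v u0 - \<beta> *\<^sub>R (X *v u0)"
  have pX0: "qf X u0 > 0" using spd_pos[OF X u0] .
  have b0: "qf Y u0 - \<beta> * qf X u0 = 0" using pX0 by (simp add: \<beta>_def RQ_def)
  have main: "s * (qf Y p - \<beta> * qf X p) \<le> 0" for p
  proof (cases "p = 0")
    case True then show ?thesis by simp
  next
    case False
    have pX: "qf X p > 0" using spd_pos[OF X False] .
    have "s * (qf Y p / qf X p) \<le> s * \<beta>" using ext False by (simp add: RQ_def \<beta>_def)
    then have "s * qf Y p \<le> s * \<beta> * qf X p" using pX
      by (simp add: divide_le_eq field_simps) 
    then show ?thesis by (simp add: algebra_simps)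
  qed
  have "\<forall>t. (s * (qf Y z - \<beta> * qf X z)) * t^2 + 2 * (s * (z \<bullet> z)) * t \<le> 0"
  proof
    fix t
    have zz: "z \<bullet> z = z \<bullet> (Y *v u0) - \<beta> * (z \<bullet> (X *v u0))" by (simp add: z_def inner_diff_right)
    have e: "(s * (qf Y z - \<beta> * qf X z)) * t^2 + 2 * (s * (z \<bullet> z)) * t
        = s * (qf Y (u0 + t *\<^sub>R z) - \<beta> * qf X (u0 + t *\<^sub>R z))"
      unfolding zz qf_add[OF spd_sym[OF X], of u0 t z] qf_add[OF spd_sym[OF Y], of u0 t z]
      using b0 by (simp add: algebra_simps)
    show "(s * (qf Y z - \<beta> * qf X z)) * t^2 + 2 * (s * (z \<bullet> z)) * t \<le> 0"
      unfolding e by (rule main)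
  qed
  then have "s * (z \<bullet> z) = 0" by (rule quad_zero)
  then have "z = 0" using sgn by auto
  then show ?thesis by (simp add: z_def \<beta>_def)
qed

lemma RQ_cont: "continuous_on {p. spd (fst p) \<and> snd p \<noteq> 0} (\<lambda>p. RQ (fst p) Y (snd p :: real^'n))"
proof -
  have "continuous_on {p. spd (fst p) \<and> snd p \<noteq> 0} (\<lambda>p. qf (fst (Y, snd p)) (snd (Y, snd p)) / qf (fst p) (snd p))"
    by (intro continuous_intros continuous_on_compose2[OF qf_cont] | force dest: spd_pos simp: )+
  then show ?thesis by (simp add: RQ_def)
qed



lemma qf_cont1: "continuous_on S (qf A)"
  unfolding qf_expand[abs_def] by (intro continuous_intros)

lemma RQ_pos: "spd X \<Longrightarrow> spd Y \<Longrightarrow> u \<noteq> 0 \<Longrightarrow> RQ X Y u > 0"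
  by (simp add: RQ_def spd_pos)

lemma lam_max_char:
  fixes X Y :: "real^'n^'n"
  assumes X: "spd X" and Y: "spd Y" and u0: "u0 \<noteq> 0"
    and ext: "\<forall>u. u \<noteq> 0 \<longrightarrow> RQ X Y u \<le> RQ X Y u0"
  shows "lam_max Y X = RQ X Y u0"
proof -
  have ext': "\<forall>u. u \<noteq> 0 \<longrightarrow> (1) * RQ X Y u \<le> (1) * RQ X Y u0"
    using ext by simp
  have "Y *v u0 = RQ X Y u0 *\<^sub>R (X *v u0)"
    by (rule stat_gen[OF X Y u0 _ ext']) simp
  then have mem: "RQ X Y u0 \<in> real_eigenvalues (Y ** matrix_inv X)"
    unfolding eig_iff[OF X] using u0 by blast
  have le: "l \<le> RQ X Y u0" if "l \<in> real_eigenvalues (Y ** matrix_inv X)" for l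
  proof -
    have ex: "\<exists>u. u \<noteq> 0 \<and> Y *v u = l *\<^sub>R (X *v u)" using iffD1[OF eig_iff[OF X] that] .
    obtain u where u: "u \<noteq> 0" "Y *v u = l *\<^sub>R (X *v u)" using ex by blast
    then have "l = RQ X Y u" unfolding RQ_def by (rule eig_R[OF X])
    then show ?thesis using ext u by simp
  qed
  show ?thesis unfolding lam_max_def
    by (rule Max_eqI[OF eig_finite[OF X Y] le mem])
qed

lemma lam_min_char:
  fixes X Y :: "real^'n^'n"
  assumes X: "spd X" and Y: "spd Y" and u0: "u0 \<noteq> 0"
    and ext: "\<forall>u. u \<noteq> 0 \<longrightarrow> RQ X Y u0 \<le> RQ X Y u"
  shows "lam_min Y X = RQ X Y u0"
proof -
  have ext': "\<forall>u. u \<noteq> 0 \<longrightarrow> (-1) * RQ X Y u \<le> (-1) * RQ X Y u0"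
    using ext by simp
  have "Y *v u0 = RQ X Y u0 *\<^sub>R (X *v u0)"
    by (rule stat_gen[OF X Y u0 _ ext']) simp
  then have mem: "RQ X Y u0 \<in> real_eigenvalues (Y ** matrix_inv X)"
    unfolding eig_iff[OF X] using u0 by blast
  have le: "RQ X Y u0 \<le> l" if "l \<in> real_eigenvalues (Y ** matrix_inv X)" for l
  proof -
    have ex: "\<exists>u. u \<noteq> 0 \<and> Y *v u = l *\<^sub>R (X *v u)" using iffD1[OF eig_iff[OF X] that] .
    obtain u where u: "u \<noteq> 0" "Y *v u = l *\<^sub>R (X *v u)" using ex by blast
    then have "l = RQ X Y u" unfolding RQ_def by (rule eig_R[OF X])
    then show ?thesis using ext u by simp
  qed
  show ?thesis unfolding lam_min_def
    by (rule Min_eqI[OF eig_finite[OF X Y] le mem])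
qed

lemma sphere_ne: "sphere (0::real^'n) 1 \<noteq> {}"
  by simp

lemma norm1_nz: "norm u = 1 \<Longrightarrow> u \<noteq> (0::real^'n)"
  by auto

lemma RQ_cont_K: "spd X \<Longrightarrow> continuous_on (sphere 0 1) (RQ X Y)"
  unfolding RQ_def[abs_def]
  by (intro continuous_intros qf_cont1) (auto dest!: norm1_nz dest: spd_pos)

lemma RQ_norm: "u \<noteq> 0 \<Longrightarrow> RQ X Y u = RQ X Y ((1 / norm u) *\<^sub>R u) \<and> (1 / norm u) *\<^sub>R u \<in> sphere 0 1"
  by (simp add: RQ_scale)

lemma max_exists:
  fixes X Y :: "real^'n^'n"
  assumes X: "spd X"
  shows "\<exists>u0\<in>sphere 0 1. \<forall>u. u \<noteq> 0 \<longrightarrow> RQ X Y u \<le> RQ X Y u0"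
proof -
  obtain u0 where u0: "u0 \<in> sphere 0 1" "\<forall>u\<in>sphere 0 1. RQ X Y u \<le> RQ X Y u0"
    using continuous_attains_sup[OF compact_sphere sphere_ne RQ_cont_K[OF X]] by blast
  then show ?thesis using RQ_norm by metis
qed

lemma min_exists:
  fixes X Y :: "real^'n^'n"
  assumes X: "spd X"
  shows "\<exists>u0\<in>sphere 0 1. \<forall>u. u \<noteq> 0 \<longrightarrow> RQ X Y u0 \<le> RQ X Y u"
proof -
  obtain u0 where u0: "u0 \<in> sphere 0 1" "\<forall>u\<in>sphere 0 1. RQ X Y u0 \<le> RQ X Y u"
    using continuous_attains_inf[OF compact_sphere sphere_ne RQ_cont_K[OF X]] by blast
  then show ?thesis using RQ_norm by metis
qed

lemma cont_max_param:
  fixes f :: "'a::metric_space \<times> 'b::metric_space \<Rightarrow> real"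
  assumes S: "compact S" and K: "compact K" and f: "continuous_on (S \<times> K) f"
    and g: "\<And>x. x \<in> S \<Longrightarrow> (\<exists>u\<in>K. g x = f (x, u)) \<and> (\<forall>u\<in>K. f (x, u) \<le> g x)"
  shows "continuous_on S g"
proof -
  have uc: "uniformly_continuous_on (S \<times> K) f"
    using compact_uniformly_continuous[OF f compact_Times[OF S K]] .
  show ?thesis unfolding continuous_on_iff
  proof (intro ballI allI impI)
    fix x e assume x: "x \<in> S" and e: "(0::real) < e"
    obtain d where d: "d > 0" "\<forall>p\<in>S \<times> K. \<forall>p'\<in>S \<times> K. dist p' p < d \<longrightarrow> dist (f p') (f p) < e / 2"
      using uc e unfolding uniformly_continuous_on_def by (meson half_gt_zero)
    have "dist (g x') (g x) < e" if x': "x' \<in> S" "dist x' x < d" for x'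
    proof -
      have dd: "dist (x', u) (x, u) < d" for u using x' by (simp add: dist_Pair_Pair)
      have dd2: "dist (x, u) (x', u) < d" for u using x' by (simp add: dist_Pair_Pair dist_commute)
      obtain u where u: "u \<in> K" "g x = f (x, u)" using g[OF x] by blast
      obtain u' where u': "u' \<in> K" "g x' = f (x', u')" using g[OF x'(1)] by blast
      have "dist (f (x', u)) (f (x, u)) < e/2"
        using d(2)[rule_format, of "(x, u)" "(x', u)"] dd[of u] u x x'(1) by auto
      moreover have "f (x', u) \<le> g x'" using g[OF x'(1)] u by blast
      ultimately have 1: "g x \<le> g x' + e/2" using u unfolding dist_real_def by (smt (verit))
      have "dist (f (x, u')) (f (x', u')) < e/2"
        using d(2)[rule_format, of "(x', u')" "(x, u')"] dd2[of u'] u' x x'(1) by auto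
      moreover have "f (x, u') \<le> g x" using g[OF x] u' by blast
      ultimately have 2: "g x' \<le> g x + e/2" using u' unfolding dist_real_def by (smt (verit))
      show ?thesis using 1 2 e by (simp add: dist_real_def)
    qed
    then show "\<exists>d>0. \<forall>x'\<in>S. dist x' x < d \<longrightarrow> dist (g x') (g x) < e" using d(1) by blast
  qed
qed

lemma cont_min_param:
  fixes f :: "'a::metric_space \<times> 'b::metric_space \<Rightarrow> real"
  assumes S: "compact S" and K: "compact K" and f: "continuous_on (S \<times> K) f"
    and g: "\<And>x. x \<in> S \<Longrightarrow> (\<exists>u\<in>K. g x = f (x, u)) \<and> (\<forall>u\<in>K. g x \<le> f (x, u))"
  shows "continuous_on S g"
proof -
  have "continuous_on S (\<lambda>x. - g x)"
    by (rule cont_max_param[OF S K, of "\<lambda>p. - f p"]) (use f g in \<open>auto intro: continuous_intros\<close>)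
  from continuous_on_minus[OF this] show ?thesis by simp
qed

lemma lam_cont:
  fixes Y :: "real^'n^'n"
  assumes S: "compact S" and spdS: "\<forall>X\<in>S. spd X" and Y: "spd Y"
  shows "continuous_on S (lam_max Y)" "continuous_on S (lam_min Y)"
proof -
  have f: "continuous_on (S \<times> sphere 0 1) (\<lambda>p. RQ (fst p) Y (snd p))"
    by (rule continuous_on_subset[OF RQ_cont]) (use spdS in auto)
  show "continuous_on S (lam_max Y)"
  proof (rule cont_max_param[OF S compact_sphere f])
    fix X assume "X \<in> S"
    then have X: "spd X" using spdS by blast
    obtain u0 where u0: "u0 \<in> sphere 0 1" "\<forall>u. u \<noteq> 0 \<longrightarrow> RQ X Y u \<le> RQ X Y u0"
      using max_exists[OF X] by blast
    have "u0 \<noteq> 0" using u0(1) by auto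
    then have "lam_max Y X = RQ X Y u0" using lam_max_char[OF X Y _ u0(2)] by blast
    then show "(\<exists>u\<in>sphere 0 1. lam_max Y X = RQ (fst (X, u)) Y (snd (X, u))) \<and>
          (\<forall>u\<in>sphere 0 1. RQ (fst (X, u)) Y (snd (X, u)) \<le> lam_max Y X)"
    proof -
      have all: "\<forall>u\<in>sphere 0 1. RQ X Y u \<le> RQ X Y u0"
      proof
        fix u :: "real^'n" assume "u \<in> sphere 0 1"
        then have "u \<noteq> 0" by auto
        then show "RQ X Y u \<le> RQ X Y u0" using u0(2) by blast
      qed
      show ?thesis using all u0(1) \<open>lam_max Y X = RQ X Y u0\<close> by auto
    qed
  qed
  show "continuous_on S (lam_min Y)"
  proof (rule cont_min_param[OF S compact_sphere f])
    fix X assume "X \<in> S"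
    then have X: "spd X" using spdS by blast
    obtain u0 where u0: "u0 \<in> sphere 0 1" "\<forall>u. u \<noteq> 0 \<longrightarrow> RQ X Y u0 \<le> RQ X Y u"
      using min_exists[OF X] by blast
    have "u0 \<noteq> 0" using u0(1) by auto
    then have "lam_min Y X = RQ X Y u0" using lam_min_char[OF X Y _ u0(2)] by blast
    then show "(\<exists>u\<in>sphere 0 1. lam_min Y X = RQ (fst (X, u)) Y (snd (X, u))) \<and>
          (\<forall>u\<in>sphere 0 1. lam_min Y X \<le> RQ (fst (X, u)) Y (snd (X, u)))"
    proof -
      have all: "\<forall>u\<in>sphere 0 1. RQ X Y u0 \<le> RQ X Y u"
      proof
        fix u :: "real^'n" assume "u \<in> sphere 0 1"
        then have "u \<noteq> 0" by auto
        then show "RQ X Y u0 \<le> RQ X Y u" using u0(2) by blast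
      qed
      show ?thesis using all u0(1) \<open>lam_min Y X = RQ X Y u0\<close> by auto
    qed
  qed
qed

lemma lam_pos:
  fixes X Y :: "real^'n^'n"
  assumes X: "spd X" and Y: "spd Y"
  shows "0 < lam_min Y X" "lam_min Y X \<le> lam_max Y X"
proof -
  obtain u0 where u0: "u0 \<in> sphere 0 1" "\<forall>u. u \<noteq> 0 \<longrightarrow> RQ X Y u0 \<le> RQ X Y u"
    using min_exists[OF X] by blast
  obtain u1 where u1: "u1 \<in> sphere 0 1" "\<forall>u. u \<noteq> 0 \<longrightarrow> RQ X Y u \<le> RQ X Y u1"
    using max_exists[OF X] by blast
  have n: "u0 \<noteq> 0" "u1 \<noteq> 0" using u0(1) u1(1) by auto
  have a: "lam_min Y X = RQ X Y u0" using lam_min_char[OF X Y n(1) u0(2)] .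
  have b: "lam_max Y X = RQ X Y u1" using lam_max_char[OF X Y n(2) u1(2)] .
  show "0 < lam_min Y X" using a RQ_pos[OF X Y n(1)] by simp
  show "lam_min Y X \<le> lam_max Y X" using a b u0(2) n by simp
qed

lemma RQ_smult: "RQ (c *\<^sub>R X) Y u = RQ X Y u / c"
  by (simp add: RQ_def qf_def scaleR_matrix_vector_assoc[symmetric])

lemma spd_scale: "spd X \<Longrightarrow> c > 0 \<Longrightarrow> spd (c *\<^sub>R X)"
  unfolding spd_def by (simp add: transpose_scalar scaleR_matrix_vector_assoc[symmetric])

lemma transpose_add': "transpose (A + B) = transpose A + transpose (B::real^'n^'n)"
  by (simp add: transpose_def vec_eq_iff)

lemma spd_add: "spd A \<Longrightarrow> spd B \<Longrightarrow> spd (A + B)"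
  unfolding spd_def
  by (simp add: matrix_vector_mult_add_rdistrib inner_add_right transpose_add' add_pos_pos)

lemma spd_convex: "convex {A::real^'n^'n. spd A}"
  unfolding convex_def
proof (clarify)
  fix x y :: "real^'n^'n" and u v :: real
  assume "spd x" "spd y" "0 \<le> u" "0 \<le> v" "u + v = 1"
  then show "spd (u *\<^sub>R x + v *\<^sub>R y)"
  proof (cases "u = 0")
    case True then show ?thesis using \<open>spd y\<close> \<open>u + v = 1\<close> by simp
  next
    case False
    show ?thesis
    proof (cases "v = 0")
      case True then show ?thesis using \<open>spd x\<close> \<open>u + v = 1\<close> by simp
    next
      case False
      then have "u > 0" "v > 0" using \<open>u \<noteq> 0\<close> \<open>0 \<le> u\<close> \<open>0 \<le> v\<close> by auto
      then show ?thesis using spd_add spd_scale \<open>spd x\<close> \<open>spd y\<close> by blast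
    qed
  qed
qed

lemma lam_scale:
  fixes X Y :: "real^'n^'n"
  assumes X: "spd X" and Y: "spd Y" and c: "c > 0"
  shows "lam_max Y (c *\<^sub>R X) = lam_max Y X / c" "lam_min Y (c *\<^sub>R X) = lam_min Y X / c"
proof -
  have cX: "spd (c *\<^sub>R X)" using spd_scale[OF X c] .
  obtain u0 where u0: "u0 \<in> sphere 0 1" "\<forall>u. u \<noteq> 0 \<longrightarrow> RQ X Y u0 \<le> RQ X Y u"
    using min_exists[OF X] by blast
  obtain u1 where u1: "u1 \<in> sphere 0 1" "\<forall>u. u \<noteq> 0 \<longrightarrow> RQ X Y u \<le> RQ X Y u1"
    using max_exists[OF X] by blast
  have n: "u0 \<noteq> 0" "u1 \<noteq> 0" using u0(1) u1(1) by auto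
  have a: "lam_min Y X = RQ X Y u0" using lam_min_char[OF X Y n(1) u0(2)] .
  have b: "lam_max Y X = RQ X Y u1" using lam_max_char[OF X Y n(2) u1(2)] .
  have "lam_min Y (c *\<^sub>R X) = RQ (c *\<^sub>R X) Y u0"
    using u0(2) c by (intro lam_min_char[OF cX Y n(1)]) (simp add: RQ_smult divide_right_mono)
  then show "lam_min Y (c *\<^sub>R X) = lam_min Y X / c" using a by (simp add: RQ_smult)
  have "lam_max Y (c *\<^sub>R X) = RQ (c *\<^sub>R X) Y u1"
    using u1(2) c by (intro lam_max_char[OF cX Y n(2)]) (simp add: RQ_smult divide_right_mono)
  then show "lam_max Y (c *\<^sub>R X) = lam_max Y X / c" using b by (simp add: RQ_smult)
qed



definition LL :: "real \<Rightarrow> real" where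
  "LL x = (if x = 1 then 1 else ln x / (x - 1))"

lemma LL_pos: "x > 0 \<Longrightarrow> LL x > 0"
proof -
  assume x: "x > 0"
  consider "x = 1" | "x > 1" | "x < 1" by linarith
  then show ?thesis
  proof cases
    case 2 then show ?thesis by (simp add: LL_def)
  next
    case 3 then have "ln x < 0" using x by simp
    then show ?thesis using 3 by (simp add: LL_def divide_neg_neg)
  qed (simp add: LL_def)
qed

lemma m_ab_LL: "a > 0 \<Longrightarrow> b > 0 \<Longrightarrow> m_ab a b = LL (b / a) / a"
  by (auto simp: m_ab_def LL_def ln_div field_simps)

lemma LL_cont: "continuous_on {0<..} LL"
proof -
  have "isCont LL x" if x: "x > 0" for x
  proof (cases "x = 1")
    case True
    have d: "(ln has_field_derivative 1) (at (1::real))"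
      by (auto intro!: derivative_eq_intros)
    then have "((\<lambda>y::real. (ln y - ln 1) / (y - 1)) \<longlongrightarrow> 1) (at 1)"
      unfolding has_field_derivative_iff by simp
    then have "((\<lambda>y::real. ln y / (y - 1)) \<longlongrightarrow> 1) (at 1)" by simp
    moreover have "\<forall>\<^sub>F y in at 1. ln y / (y - 1) = LL y"
      unfolding LL_def eventually_at_filter by simp
    ultimately have "(LL \<longlongrightarrow> 1) (at 1)" by (rule tendsto_cong[THEN iffD1, rotated])
    then show ?thesis using True by (simp add: isCont_def LL_def)
  next
    case False
    have "isCont (\<lambda>y. ln y / (y - 1)) x" using x False by (intro continuous_intros) auto
    moreover have "\<forall>\<^sub>F y in nhds x. ln y / (y - 1) = LL y"
      using eventually_nhds_in_open[of "-{1}" x] False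
      by (auto simp: LL_def elim!: eventually_mono)
    ultimately show ?thesis using isCont_cong[of "\<lambda>y. ln y / (y - 1)" LL x] by auto
  qed
  then show ?thesis by (simp add: continuous_at_imp_continuous_on)
qed

lemma m_ab_scale: "a > 0 \<Longrightarrow> b > 0 \<Longrightarrow> c > 0 \<Longrightarrow> m_ab (a / c) (b / c) = c * m_ab a b"
  by (cases "a = b") (auto simp: m_ab_def ln_div field_simps)

lemma o_ab_scale: "a > 0 \<Longrightarrow> b > 0 \<Longrightarrow> c > 0 \<Longrightarrow> o_ab (a / c) (b / c) = o_ab a b - ln c"
  by (cases "a = b") (auto simp: o_ab_def ln_div field_simps)



lemma m_coef_LL: "spd X \<Longrightarrow> spd Y \<Longrightarrow> m_coef Y X = LL (lam_max Y X / lam_min Y X) / lam_min Y X"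
  unfolding m_coef_def using lam_pos[of X Y] by (intro m_ab_LL) auto

lemma m_coef_pos: "spd X \<Longrightarrow> spd Y \<Longrightarrow> m_coef Y X > 0"
  using lam_pos[of X Y] by (simp add: m_coef_LL LL_pos)

lemma m_coef_cont:
  assumes S: "compact S" and spdS: "\<forall>X\<in>S. spd X" and Y: "spd Y"
  shows "continuous_on S (m_coef Y)"
proof -
  note c1 = lam_cont(1)[OF S spdS Y] and c2 = lam_cont(2)[OF S spdS Y]
  have nz: "\<And>X. X \<in> S \<Longrightarrow> lam_min Y X \<noteq> 0" using lam_pos spdS Y by (metis less_irrefl)
  have im: "(\<lambda>X. lam_max Y X / lam_min Y X) ` S \<subseteq> {0<..}"
    using lam_pos spdS Y by (fastforce intro!: divide_pos_pos)
  have "continuous_on S (\<lambda>X. lam_max Y X / lam_min Y X)"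
    by (rule continuous_on_divide[OF c1 c2]) (use nz in auto)
  then have "continuous_on S (\<lambda>X. LL (lam_max Y X / lam_min Y X))"
    by (rule continuous_on_compose2[OF LL_cont _ im])
  then have "continuous_on S (\<lambda>X. LL (lam_max Y X / lam_min Y X) / lam_min Y X)"
    by (rule continuous_on_divide[OF _ c2]) (use nz in auto)
  then show ?thesis
  proof (rule continuous_on_eq)
    fix x assume "x \<in> S"
    then have "spd x" using spdS by blast
    then show "LL (lam_max Y x / lam_min Y x) / lam_min Y x = m_coef Y x" using m_coef_LL[OF _ Y] by simp
  qed
qed

lemma m_coef_scale: "spd X \<Longrightarrow> spd Y \<Longrightarrow> c > 0 \<Longrightarrow> m_coef Y (c *\<^sub>R X) = c * m_coef Y X"
  unfolding m_coef_def using lam_scale[of X Y c] lam_pos[of X Y] by (simp add: m_ab_scale)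

lemma o_coef_scale: "spd X \<Longrightarrow> spd Y \<Longrightarrow> c > 0 \<Longrightarrow> o_coef Y (c *\<^sub>R X) = o_coef Y X - ln c"
  unfolding o_coef_def using lam_scale[of X Y c] lam_pos[of X Y] by (simp add: o_ab_scale)

theorem lemma4p4:
  fixes k :: nat and Y :: "nat \<Rightarrow> real^'n^'n" and X1 :: "real^'n^'n"
  assumes "k \<ge> 1"
    and "\<forall>j\<in>{1..k}. spd (Y j)"
    and "spd X1"
  shows "\<exists>Xs \<in> {c *\<^sub>R Z | c Z. c > 0 \<and> Z \<in> convex hull (insert X1 (Y ` {1..k}))}.
           (\<Sum>j=1..k. m_coef (Y j) Xs *\<^sub>R Y j) + (\<Sum>j=1..k. o_coef (Y j) Xs) *\<^sub>R Xs = 0"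
proof -
  define S where "S = convex hull (Y ` {1..k})"
  have Sc: "compact S" unfolding S_def by (intro compact_convex_hull finite_imp_compact) auto
  have Sv: "convex S" unfolding S_def by simp
  have Sne: "S \<noteq> {}" unfolding S_def using assms(1) by auto
  have spdS: "\<forall>X\<in>S. spd X"
  proof -
    have "S \<subseteq> {A. spd A}" unfolding S_def
      by (rule hull_minimal) (use assms(2) spd_convex in auto)
    then show ?thesis by blast
  qed
  define M where "M X = (\<Sum>j=1..k. m_coef (Y j) X)" for X
  have Mpos: "M X > 0" if "X \<in> S" for X
    unfolding M_def using assms(1) spdS that
    by (intro sum_pos) (auto intro!: m_coef_pos assms(2)[rule_format])
  define F where "F X = (\<Sum>j=1..k. (m_coef (Y j) X / M X) *\<^sub>R Y j)" for X
  have Mnz: "(\<Sum>j=1..k. m_coef (Y j) X) \<noteq> 0" if "X \<in> S" for X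
    using Mpos[OF that] unfolding M_def by simp
  have Fc: "continuous_on S F" unfolding F_def M_def
    using m_coef_cont[OF Sc spdS] assms(2)
    by (intro continuous_intros) (auto dest: Mnz)
  have Fim: "F \<in> S \<rightarrow> S"
  proof
    fix X assume X: "X \<in> S"
    show "F X \<in> S" unfolding F_def
    proof (rule convex_sum)
      show "convex S" by (rule Sv)
      show "(\<Sum>i = 1..k. m_coef (Y i) X / M X) = 1"
        using Mpos[OF X] by (simp add: sum_divide_distrib[symmetric] M_def)
      show "\<And>i. i \<in> {1..k} \<Longrightarrow> 0 \<le> m_coef (Y i) X / M X"
      proof -
        fix i assume "i \<in> {1..k}"
        then have "spd (Y i)" using assms(2) by blast
        moreover have "spd X" using spdS X by blast
        ultimately have "m_coef (Y i) X > 0" using m_coef_pos by blast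
        then show "0 \<le> m_coef (Y i) X / M X" using Mpos[OF X] by simp
      qed
      show "\<And>i. i \<in> {1..k} \<Longrightarrow> Y i \<in> S" unfolding S_def by (simp add: hull_inc)
    qed simp
  qed
  obtain X0 where X0: "X0 \<in> S" "F X0 = X0" using brouwer[OF Sc Sv Sne Fc Fim] by blast
  have sX0: "spd X0" using spdS X0 by blast
  have fixp: "(\<Sum>j=1..k. m_coef (Y j) X0 *\<^sub>R Y j) = M X0 *\<^sub>R X0"
  proof -
    have "M X0 *\<^sub>R X0 = M X0 *\<^sub>R F X0" using X0 by simp
    also have "\<dots> = (\<Sum>j=1..k. m_coef (Y j) X0 *\<^sub>R Y j)"
      using Mpos[OF X0(1)] by (simp add: F_def scaleR_sum_right)
    finally show ?thesis by simp
  qed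
  define Osum where "Osum = (\<Sum>j=1..k. o_coef (Y j) X0)"
  define c where "c = exp ((M X0 + Osum) / real k)"
  have c: "c > 0" unfolding c_def by simp
  have lnc: "real k * ln c = M X0 + Osum" unfolding c_def using assms(1) by simp
  have mm: "(\<Sum>j=1..k. m_coef (Y j) (c *\<^sub>R X0) *\<^sub>R Y j) = c *\<^sub>R (M X0 *\<^sub>R X0)"
    unfolding fixp[symmetric] scaleR_sum_right
    using m_coef_scale[OF sX0 _ c] assms(2) by (intro sum.cong) auto
  have oo: "(\<Sum>j=1..k. o_coef (Y j) (c *\<^sub>R X0)) = Osum - real k * ln c"
    unfolding Osum_def using o_coef_scale[OF sX0 _ c] assms(2) by (simp add: sum_subtractf)
  have eq: "(\<Sum>j=1..k. m_coef (Y j) (c *\<^sub>R X0) *\<^sub>R Y j) + (\<Sum>j=1..k. o_coef (Y j) (c *\<^sub>R X0)) *\<^sub>R (c *\<^sub>R X0) = 0"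
    unfolding mm oo using lnc by (simp add: scaleR_add_left[symmetric] algebra_simps)
  have mem: "c *\<^sub>R X0 \<in> {c *\<^sub>R Z | c Z. c > 0 \<and> Z \<in> convex hull (insert X1 (Y ` {1..k}))}"
  proof -
    have "S \<subseteq> convex hull (insert X1 (Y ` {1..k}))" unfolding S_def by (rule hull_mono) auto
    then show ?thesis using c X0(1) by blast
  qed
  show ?thesis using mem eq by blast
qed


end
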